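(* Let $q>0$ be a constant and consider $$u_t=d_1\Delta u+u\left[\frac{(1-u)(u-p)}{1+qv}-av\right],\qquad v_t=d_2\Delta v+bv(1-v-cu)\quad\text{in }\Omega\times(0,\infty),$$ with $\partial_\nu u=\partial_\nu v=0$ on $\partial\Omega$. Let $(u^*,v^* )$ be a positive equilibrium of the kinetic system $\dot u=u[\frac{(1-u)(u-p)}{1+qv}-av]$, $\dot v=bv(1-v-cu)$ that is linearly asymptotically stable for the kinetic system (trace of the Jacobian negative, determinant positive). Then for all parameter values and all diffusion coefficients $d_1,d_2>0$, the spatially homogeneous steady state $(u^*,v^* )$ does not undergo diffusion-driven (Turing) instability: for every eigenvalue $\mu\ge0$ of $-\Delta$ with Neumann boundary conditions, all eigenvalues of $J(u^*,v^* )-\mu\,\mathrm{diag}(d_1,d_2)$ have negative real part, where $J(u^*,v^* )$ is the kinetic Jacobian.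
   Context: $\Omega\subset\mathbb{R}^n$ is a bounded domain with smooth boundary and outward normal $\nu$; $a,b,c>0$, $0\le p<1$. *)

theory Defs
  imports "HOL-Analysis.Analysis"
begin

definition kin_f :: "real \<Rightarrow> real \<Rightarrow> real \<Rightarrow> real \<Rightarrow> real \<Rightarrow> real" where
  "kin_f p q a u v = u * ((1 - u) * (u - p) / (1 + q * v) - a * v)"

definition kin_g :: "real \<Rightarrow> real \<Rightarrow> real \<Rightarrow> real \<Rightarrow> real" where
  "kin_g b c u v = b * v * (1 - v - c * u)"

definition jac11 where "jac11 p q a u0 v0 = deriv (\<lambda>u. kin_f p q a u v0) u0"
definition jac12 where "jac12 p q a u0 v0 = deriv (\<lambda>v. kin_f p q a u0 v) v0"
definition jac21 where "jac21 b c u0 v0 = deriv (\<lambda>u. kin_g b c u v0) u0"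
definition jac22 where "jac22 b c u0 v0 = deriv (\<lambda>v. kin_g b c u0 v) v0"

definition eigenvalue2 :: "real \<Rightarrow> real \<Rightarrow> real \<Rightarrow> real \<Rightarrow> complex \<Rightarrow> bool" where
  "eigenvalue2 m11 m12 m21 m22 z \<longleftrightarrow>
     (of_real m11 - z) * (of_real m22 - z) - of_real m12 * of_real m21 = 0"

definition pd :: "('n::euclidean_space \<Rightarrow> real) \<Rightarrow> 'n \<Rightarrow> 'n \<Rightarrow> real" where
  "pd \<phi> i x = deriv (\<lambda>s. \<phi> (x + s *\<^sub>R i)) 0"

definition laplacian :: "('n::euclidean_space \<Rightarrow> real) \<Rightarrow> 'n \<Rightarrow> real" where
  "laplacian \<phi> x = (\<Sum>i\<in>Basis. pd (pd \<phi> i) i x)"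

definition normal_deriv :: "('n::euclidean_space \<Rightarrow> real) \<Rightarrow> ('n \<Rightarrow> 'n) \<Rightarrow> 'n \<Rightarrow> real" where
  "normal_deriv \<phi> \<nu> x = (\<Sum>i\<in>Basis. pd \<phi> i x * (\<nu> x \<bullet> i))"

definition neumann_eigenvalue :: "'n::euclidean_space set \<Rightarrow> ('n \<Rightarrow> 'n) \<Rightarrow> real \<Rightarrow> bool" where
  "neumann_eigenvalue \<Omega> \<nu> \<mu> \<longleftrightarrow>
     (\<exists>\<phi> U. open U \<and> closure \<Omega> \<subseteq> U \<and> \<phi> differentiable_on U \<and>
        (\<forall>i\<in>Basis. pd \<phi> i differentiable_on U \<and> continuous_on U (pd (pd \<phi> i) i)) \<and>
        (\<forall>i\<in>Basis. \<forall>x\<in>U. ((\<lambda>s. \<phi> (x + s *\<^sub>R i)) has_real_derivative pd \<phi> i x) (at 0)) \<and>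
        (\<exists>x\<in>\<Omega>. \<phi> x \<noteq> 0) \<and>
        (\<forall>x\<in>\<Omega>. - laplacian \<phi> x = \<mu> * \<phi> x) \<and>
        (\<forall>x\<in>frontier \<Omega>. normal_deriv \<phi> \<nu> x = 0))"

end

theory Submission
  imports Defs
begin

lemma j22: "jac22 b c x0 w0 = b*(1 - w0 - c*x0) - b * w0"
proof -
  have "((\<lambda>v. kin_g b c x0 v) has_real_derivative (b*(1 - w0 - c*x0) - b * w0)) (at w0)"
    unfolding kin_g_def by (auto intro!: derivative_eq_intros simp: algebra_simps)
  then show ?thesis unfolding jac22_def by (rule DERIV_imp_deriv)
qed
lemma j21: "jac21 b c x0 w0 = - b * w0*c"
proof -
  have "((\<lambda>u. kin_g b c u w0) has_real_derivative (- b * w0*c)) (at x0)"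
    unfolding kin_g_def by (auto intro!: derivative_eq_intros simp: algebra_simps)
  then show ?thesis unfolding jac21_def by (rule DERIV_imp_deriv)
qed
lemma j12: assumes "1 + q * w0 > 0" shows "jac12 p q a x0 w0 = x0*(-(1-x0)*(x0-p)*q/(1+q * w0)^2 - a)"
proof -
  have "((\<lambda>v. kin_f p q a x0 v) has_real_derivative x0*(-(1-x0)*(x0-p)*q/(1+q * w0)^2 - a)) (at w0)"
    unfolding kin_f_def using assms
    by (auto intro!: derivative_eq_intros simp: field_simps power2_eq_square)
  then show ?thesis unfolding jac12_def by (rule DERIV_imp_deriv)
qed

lemma stab2:
  fixes m11 m12 m21 m22 :: real and z :: complex
  assumes "m11 + m22 < 0" "m11*m22 - m12*m21 > 0" "eigenvalue2 m11 m12 m21 m22 z"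
  shows "Re z < 0"
proof -
  obtain x y where z: "z = Complex x y" by (cases z)
  from assms(3) have e: "(complex_of_real m11 - z) * (of_real m22 - z) - of_real m12 * of_real m21 = 0"
    unfolding eigenvalue2_def .
  have re: "(m11 - x)*(m22 - x) - y*y - m12*m21 = 0"
    using arg_cong[OF e, of Re] by (simp add: z)
  have im: "y*(m11 + m22 - 2*x) = 0"
    using arg_cong[OF e, of Im] by (simp add: z algebra_simps)
  show ?thesis
  proof (cases "y = 0")
    case True
    then have "x*x - (m11+m22)*x + (m11*m22 - m12*m21) = 0" using re by (simp add: algebra_simps)
    then have eq: "x*x - (m11+m22)*x + (m11*m22 - m12*m21) = 0" .
    have "x < 0"
    proof (rule ccontr)
      assume "\<not> x < 0"
      then have "x \<ge> 0" by simp
      then have "x*x \<ge> 0" "-(m11+m22)*x \<ge> 0" using assms(1) by simp_all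
      then show False using eq assms(2) by linarith
    qed
    then show ?thesis using z by simp
  next
    case False
    then have "x = (m11+m22)/2" using im by simp
    then show ?thesis using assms(1) z by simp
  qed
qed

theorem mainTheorem17:
  fixes \<Omega> :: "'n::euclidean_space set" and \<nu> :: "'n \<Rightarrow> 'n"
    and a b c p q d1 d2 us vs :: real
  assumes "open \<Omega>" and "bounded \<Omega>" and "connected \<Omega>" and "\<Omega> \<noteq> {}"
    and "\<forall>x\<in>frontier \<Omega>. norm (\<nu> x) = 1"
    and "a > 0" and "b > 0" and "c > 0" and "0 \<le> p" and "p < 1" and "q > 0"
    and "d1 > 0" and "d2 > 0"
    and "us > 0" and "vs > 0"
    and "kin_f p q a us vs = 0" and "kin_g b c us vs = 0"
    and "jac11 p q a us vs + jac22 b c us vs < 0"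
    and "jac11 p q a us vs * jac22 b c us vs - jac12 p q a us vs * jac21 b c us vs > 0"
  shows "\<forall>\<mu>. neumann_eigenvalue \<Omega> \<nu> \<mu> \<and> \<mu> \<ge> 0 \<longrightarrow>
           (\<forall>z. eigenvalue2 (jac11 p q a us vs - \<mu> * d1) (jac12 p q a us vs)
                             (jac21 b c us vs) (jac22 b c us vs - \<mu> * d2) z \<longrightarrow> Re z < 0)"
proof (intro allI impI)
  fix \<mu> z
  assume m: "neumann_eigenvalue \<Omega> \<nu> \<mu> \<and> \<mu> \<ge> 0"
    and ez: "eigenvalue2 (jac11 p q a us vs - \<mu> * d1) (jac12 p q a us vs)
                             (jac21 b c us vs) (jac22 b c us vs - \<mu> * d2) z"
  define J11 where "J11 = jac11 p q a us vs"
  define J12 where "J12 = jac12 p q a us vs"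
  define J21 where "J21 = jac21 b c us vs"
  define J22 where "J22 = jac22 b c us vs"
  have qv: "1 + q* vs > 0" using assms by (simp add: add_pos_pos)
  have g0: "1 - vs - c*us = 0" using assms(17,7,15) unfolding kin_g_def by simp
  have J22: "J22 < 0" unfolding J22_def j22 g0 using assms by simp
  have J21: "J21 < 0" unfolding J21_def j21 using assms by simp
  have f0: "(1 - us)*(us - p)/(1+q* vs) = a* vs" using assms(16,14) unfolding kin_f_def by simp
  have K: "(1 - us)*(us - p) > 0"
  proof -
    have "(1 - us)*(us - p) = a* vs*(1+q* vs)" using f0 qv by (simp add: field_simps)
    then show ?thesis using assms qv by simp
  qed
  have "(1-us)*(us-p)*q/(1+q* vs)^2 > 0" using K qv assms by simp
  moreover have "-(1-us)*(us-p)*q/(1+q * vs)^2 = - ((1-us)*(us-p)*q/(1+q * vs)^2)" by (simp add: minus_divide_left algebra_simps)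
  ultimately have "-(1-us)*(us-p)*q/(1+q * vs)^2 - a < 0" using assms(6) by linarith
  then have J12: "J12 < 0" unfolding J12_def j12[OF qv] using assms(14)
    by (simp only: mult_pos_neg)
  have "J12*J21 > 0" using J12 J21 by (simp add: mult_neg_neg)
  then have "J11*J22 > 0" using assms(19) unfolding J11_def J12_def J21_def J22_def by linarith
  then have J11: "J11 < 0" using J22 by (smt (verit) mult_nonneg_nonpos)
  have mu: "\<mu> \<ge> 0" using m by simp
  have tr: "(J11 - \<mu>*d1) + (J22 - \<mu>*d2) < 0"
    using J11 J22 mu assms(12,13) by (smt (verit) mult_nonneg_nonneg)
  have "(J11 - \<mu>*d1)*(J22 - \<mu>*d2) - J12*J21 =
        (J11*J22 - J12*J21) + \<mu>*(d1*(-J22)) + \<mu>*(d2*(-J11)) + \<mu>*\<mu>*(d1*d2)"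
    by (simp add: algebra_simps)
  moreover have "\<mu>*(d1*(-J22)) \<ge> 0" "\<mu>*(d2*(-J11)) \<ge> 0" "\<mu>*\<mu>*(d1*d2) \<ge> 0"
    using mu J11 J22 assms(12,13) by (simp_all add: mult_nonneg_nonpos mult_pos_neg less_imp_le)
  ultimately have det: "(J11 - \<mu>*d1)*(J22 - \<mu>*d2) - J12*J21 > 0"
    using assms(19) unfolding J11_def J12_def J21_def J22_def by linarith
  show "Re z < 0"
    using stab2[OF tr det] ez unfolding J11_def J12_def J21_def J22_def by simp
qed

end
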